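(* There exist constants $c>0$ and $\alpha_0\in(0,\frac12]$ such that for every $\alpha\in(0,\alpha_0]$, every Any-Fit algorithm $A$ for stochastic bin packing of scaled Bernoulli items with overflow bound $\alpha$, and every positive integer $N$, there is an instance of independent items $X_i\sim\operatorname{Ber}(p_i,s_i)$ with $p_i\in(0,1]$, $s_i\in(0,1]$, whose optimal viable packing uses $OPT\ge N$ bins and on which $A$ uses at least $c\,\alpha^{-1/2}\cdot OPT$ bins. In other words, every Any-Fit algorithm has approximation ratio $\Omega(\alpha^{-1/2})$.
   Context: $X\sim\operatorname{Ber}(p,s)$ means $X=s$ with probability $p$ and $0$ otherwise. Bins have capacity $1$; a set of independent items in a bin is viable if its sum $B$ satisfies $\mathbb{P}(B>1)\le\alpha$, and a packing is viable if all bins are; $OPT$ is the minimum number of bins of a viable packing. An Any-Fit algorithm processes items online in the given order, always keeps every bin viable, and opens a new bin for the current item only if adding it to any already opened bin would make that bin non-viable. *)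

theory Defs
  imports Complex_Main
begin

text \<open>An item X ~ Ber(p,s) is represented by the pair (p, s):
  X = s with probability p and 0 otherwise.\<close>
type_synonym item = "real \<times> real"

definition valid_item :: "item \<Rightarrow> bool" where
  "valid_item x \<longleftrightarrow> 0 < fst x \<and> fst x \<le> 1 \<and> 0 < snd x \<and> snd x \<le> 1"

text \<open>P(B > 1) for B the sum of the independent items in the list:
  sum over the set S of items that take their nonzero value.\<close>
definition overflow_prob :: "item list \<Rightarrow> real" where
  "overflow_prob xs =
     (\<Sum>S\<in>Pow {..<length xs}.
        (\<Prod>i\<in>S. fst (xs ! i)) * (\<Prod>i\<in>{..<length xs} - S. 1 - fst (xs ! i))
        * (if (\<Sum>i\<in>S. snd (xs ! i)) > 1 then 1 else 0))"

definition viable :: "real \<Rightarrow> item list \<Rightarrow> bool" where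
  "viable \<alpha> xs \<longleftrightarrow> overflow_prob xs \<le> \<alpha>"

definition viable_packing :: "real \<Rightarrow> item list \<Rightarrow> nat \<Rightarrow> (nat \<Rightarrow> nat) \<Rightarrow> bool" where
  "viable_packing \<alpha> xs k f \<longleftrightarrow>
     (\<forall>i<length xs. f i < k) \<and>
     (\<forall>j<k. viable \<alpha> [xs ! i. i \<leftarrow> [0..<length xs], f i = j])"

definition OPT :: "real \<Rightarrow> item list \<Rightarrow> nat" where
  "OPT \<alpha> xs = (LEAST k. \<exists>f. viable_packing \<alpha> xs k f)"

text \<open>A history records the items processed so far,
  each with the index of the bin it was put in (bins numbered 0,1,... in opening order).
  An algorithm maps the history and the current item to a bin index; an index
  \<ge> the number of open bins means "open a new bin".\<close>
type_synonym history = "(item \<times> nat) list"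
type_synonym algorithm = "history \<Rightarrow> item \<Rightarrow> nat"

definition nbins :: "history \<Rightarrow> nat" where
  "nbins h = (if h = [] then 0 else Suc (Max (snd ` set h)))"

definition bin :: "history \<Rightarrow> nat \<Rightarrow> item list" where
  "bin h j = [fst e. e \<leftarrow> h, snd e = j]"

fun run :: "algorithm \<Rightarrow> history \<Rightarrow> item list \<Rightarrow> history" where
  "run A h [] = h"
| "run A h (x # xs) = run A (h @ [(x, min (A h x) (nbins h))]) xs"

definition any_fit :: "real \<Rightarrow> algorithm \<Rightarrow> bool" where
  "any_fit \<alpha> A \<longleftrightarrow>
     (\<forall>h x. valid_item x \<longrightarrow>
        (A h x < nbins h \<longrightarrow> viable \<alpha> (bin h (A h x) @ [x])) \<and>
        (nbins h \<le> A h x \<longrightarrow> (\<forall>j<nbins h. \<not> viable \<alpha> (bin h j @ [x]))))"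

definition bins_used :: "algorithm \<Rightarrow> item list \<Rightarrow> nat" where
  "bins_used A xs = nbins (run A [] xs)"

end

theory Submission
  imports Defs
begin


lemma marg:
  fixes p q :: "nat \<Rightarrow> real"
  assumes "finite I" "T \<subseteq> I"
  shows "(\<Sum>S\<in>Pow I. (\<Prod>i\<in>S. p i) * (\<Prod>i\<in>I - S. q i) * (if T \<subseteq> S then 1 else 0))
       = (\<Prod>i\<in>T. p i) * (\<Prod>i\<in>I - T. p i + q i)"
proof -
  define g where "g i = (if i \<in> T then 0 else q i)" for i
  have "(\<Prod>i\<in>I. p i + g i) = (\<Sum>S\<in>Pow I. (\<Prod>i\<in>S. p i) * (\<Prod>i\<in>I - S. g i))"
    by (rule prod_add) (rule assms)
  also have "\<dots> = (\<Sum>S\<in>Pow I. (\<Prod>i\<in>S. p i) * (\<Prod>i\<in>I - S. q i) * (if T \<subseteq> S then 1 else 0))"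
  proof (rule sum.cong[OF refl])
    fix S assume S: "S \<in> Pow I"
    show "(\<Prod>i\<in>S. p i) * (\<Prod>i\<in>I - S. g i) = (\<Prod>i\<in>S. p i) * (\<Prod>i\<in>I - S. q i) * (if T \<subseteq> S then 1 else 0)"
    proof (cases "T \<subseteq> S")
      case True
      then have "(\<Prod>i\<in>I - S. g i) = (\<Prod>i\<in>I - S. q i)" by (intro prod.cong) (auto simp: g_def)
      then show ?thesis using True by simp
    next
      case False
      then obtain t where t: "t \<in> T" "t \<notin> S" by auto
      then have "t \<in> I - S" using assms by auto
      then have "(\<Prod>i\<in>I - S. g i) = 0" using assms(1) t by (intro prod_zero) (auto simp: g_def)
      then show ?thesis using False by simp
    qed
  qed
  finally have 1: "(\<Prod>i\<in>I. p i + g i) = (\<Sum>S\<in>Pow I. (\<Prod>i\<in>S. p i) * (\<Prod>i\<in>I - S. q i) * (if T \<subseteq> S then 1 else 0))" .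
  have "(\<Prod>i\<in>I. p i + g i) = (\<Prod>i\<in>T. p i + g i) * (\<Prod>i\<in>I - T. p i + g i)"
    using assms by (metis Diff_partition finite_Diff prod.union_disjoint Diff_disjoint finite_subset)
  also have "\<dots> = (\<Prod>i\<in>T. p i) * (\<Prod>i\<in>I - T. p i + q i)"
    by (simp add: g_def)
  finally show ?thesis using 1 by simp
qed

definition wt :: "item list \<Rightarrow> nat set \<Rightarrow> real" where
  "wt xs S = (\<Prod>i\<in>S. fst (xs ! i)) * (\<Prod>i\<in>{..<length xs} - S. 1 - fst (xs ! i))"

lemma overflow_wt: "overflow_prob xs = (\<Sum>S\<in>Pow {..<length xs}. wt xs S * (if (\<Sum>i\<in>S. snd (xs ! i)) > 1 then 1 else 0))"
  unfolding overflow_prob_def wt_def by simp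

lemma marg_wt: assumes "T \<subseteq> {..<length xs}"
  shows "(\<Sum>S\<in>Pow {..<length xs}. wt xs S * (if T \<subseteq> S then 1 else 0)) = (\<Prod>i\<in>T. fst (xs ! i))"
  using marg[OF _ assms, of "\<lambda>i. fst (xs!i)" "\<lambda>i. 1 - fst (xs!i)"] unfolding wt_def by simp

lemma wt_nonneg: assumes "\<forall>x\<in>set xs. valid_item x" "S \<subseteq> {..<length xs}"
  shows "0 \<le> wt xs S"
proof -
  have v: "i < length xs \<Longrightarrow> 0 \<le> fst (xs!i) \<and> fst (xs!i) \<le> 1" for i
    using assms(1) nth_mem[of i xs] unfolding valid_item_def by fastforce
  show ?thesis unfolding wt_def using assms(2) v
    by (intro mult_nonneg_nonneg prod_nonneg) auto
qed

lemma lower_one: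
  assumes val: "\<forall>x\<in>set xs. valid_item x" and T: "T \<subseteq> {..<length xs}"
    and sT: "(\<Sum>i\<in>T. snd (xs ! i)) > 1"
  shows "(\<Prod>i\<in>T. fst (xs ! i)) \<le> overflow_prob xs"
proof -
  have sn: "i < length xs \<Longrightarrow> 0 \<le> snd (xs!i)" for i
    using val nth_mem[of i xs] unfolding valid_item_def by fastforce
  have "(\<Prod>i\<in>T. fst (xs ! i)) = (\<Sum>S\<in>Pow {..<length xs}. wt xs S * (if T \<subseteq> S then 1 else 0))"
    using marg_wt[OF T] by simp
  also have "\<dots> \<le> overflow_prob xs" unfolding overflow_wt
  proof (rule sum_mono)
    fix S assume S: "S \<in> Pow {..<length xs}"
    have "T \<subseteq> S \<Longrightarrow> (\<Sum>i\<in>T. snd (xs ! i)) \<le> (\<Sum>i\<in>S. snd (xs ! i))"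
      using S sn by (intro sum_mono2) (auto intro: finite_subset)
    then show "wt xs S * (if T \<subseteq> S then 1 else 0) \<le> wt xs S * (if (\<Sum>i\<in>S. snd (xs ! i)) > 1 then 1 else 0)"
      using wt_nonneg[OF val] S sT by auto
  qed
  finally show ?thesis .
qed

lemma lower_two:
  assumes val: "\<forall>x\<in>set xs. valid_item x" and T1: "T1 \<subseteq> {..<length xs}" and T2: "T2 \<subseteq> {..<length xs}"
    and s1: "(\<Sum>i\<in>T1. snd (xs ! i)) > 1" and s2: "(\<Sum>i\<in>T2. snd (xs ! i)) > 1"
  shows "(\<Prod>i\<in>T1. fst (xs ! i)) + (\<Prod>i\<in>T2. fst (xs ! i)) - (\<Prod>i\<in>T1 \<union> T2. fst (xs ! i)) \<le> overflow_prob xs"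
proof -
  have sn: "i < length xs \<Longrightarrow> 0 \<le> snd (xs!i)" for i
    using val nth_mem[of i xs] unfolding valid_item_def by fastforce
  let ?I = "{..<length xs}"
  have "(\<Prod>i\<in>T1. fst (xs ! i)) + (\<Prod>i\<in>T2. fst (xs ! i)) - (\<Prod>i\<in>T1 \<union> T2. fst (xs ! i))
    = (\<Sum>S\<in>Pow ?I. wt xs S * (if T1 \<subseteq> S then 1 else 0)) + (\<Sum>S\<in>Pow ?I. wt xs S * (if T2 \<subseteq> S then 1 else 0))
      - (\<Sum>S\<in>Pow ?I. wt xs S * (if T1 \<union> T2 \<subseteq> S then 1 else 0))"
    using marg_wt[OF T1] marg_wt[OF T2] marg_wt[of "T1 \<union> T2"] T1 T2 by simp
  also have "\<dots> = (\<Sum>S\<in>Pow ?I. wt xs S * ((if T1 \<subseteq> S then 1 else 0) + (if T2 \<subseteq> S then 1 else 0) - (if T1 \<union> T2 \<subseteq> S then 1 else 0)))"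
    by (simp add: sum.distrib sum_subtractf algebra_simps)
  also have "\<dots> \<le> overflow_prob xs" unfolding overflow_wt
  proof (rule sum_mono)
    fix S assume S: "S \<in> Pow ?I"
    have a: "T1 \<subseteq> S \<Longrightarrow> (\<Sum>i\<in>T1. snd (xs ! i)) \<le> (\<Sum>i\<in>S. snd (xs ! i))"
      using S sn by (intro sum_mono2) (auto intro: finite_subset)
    have b: "T2 \<subseteq> S \<Longrightarrow> (\<Sum>i\<in>T2. snd (xs ! i)) \<le> (\<Sum>i\<in>S. snd (xs ! i))"
      using S sn by (intro sum_mono2) (auto intro: finite_subset)
    have "((if T1 \<subseteq> S then 1 else 0) + (if T2 \<subseteq> S then 1 else 0) - (if T1 \<union> T2 \<subseteq> S then 1 else 0))
       \<le> (if (\<Sum>i\<in>S. snd (xs ! i)) > 1 then 1 else (0::real))"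
      using a b s1 s2 by auto
    then show "wt xs S * ((if T1 \<subseteq> S then 1 else 0) + (if T2 \<subseteq> S then 1 else 0) - (if T1 \<union> T2 \<subseteq> S then 1 else 0))
       \<le> wt xs S * (if (\<Sum>i\<in>S. snd (xs ! i)) > 1 then 1 else 0)"
      using wt_nonneg[OF val] S by (intro mult_left_mono) auto
  qed
  finally show ?thesis .
qed

lemma upper_T:
  assumes val: "\<forall>x\<in>set xs. valid_item x" and T: "T \<subseteq> {..<length xs}"
    and H: "\<And>S. S \<subseteq> {..<length xs} \<Longrightarrow> (\<Sum>i\<in>S. snd (xs ! i)) > 1 \<Longrightarrow> T \<subseteq> S"
  shows "overflow_prob xs \<le> (\<Prod>i\<in>T. fst (xs ! i))"
proof -
  have "overflow_prob xs \<le> (\<Sum>S\<in>Pow {..<length xs}. wt xs S * (if T \<subseteq> S then 1 else 0))"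
    unfolding overflow_wt
  proof (rule sum_mono)
    fix S assume S: "S \<in> Pow {..<length xs}"
    show "wt xs S * (if (\<Sum>i\<in>S. snd (xs ! i)) > 1 then 1 else 0) \<le> wt xs S * (if T \<subseteq> S then 1 else 0)"
      using H[of S] S wt_nonneg[OF val, of S] by auto
  qed
  also have "\<dots> = (\<Prod>i\<in>T. fst (xs ! i))" using marg_wt[OF T] .
  finally show ?thesis .
qed

lemma upper_zero:
  assumes val: "\<forall>x\<in>set xs. valid_item x" and s: "(\<Sum>i<length xs. snd (xs ! i)) \<le> 1"
  shows "overflow_prob xs = 0"
proof -
  have sn: "i < length xs \<Longrightarrow> 0 \<le> snd (xs!i)" for i
    using val nth_mem[of i xs] unfolding valid_item_def by fastforce
  have "S \<subseteq> {..<length xs} \<Longrightarrow> (\<Sum>i\<in>S. snd (xs ! i)) \<le> 1" for S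
    using sum_mono2[of "{..<length xs}" S "\<lambda>i. snd (xs!i)"] sn s by auto
  then have "\<forall>S\<in>Pow {..<length xs}. \<not> (\<Sum>i\<in>S. snd (xs ! i)) > 1" by (auto simp: not_less)
  then show ?thesis unfolding overflow_prob_def
    by (intro sum.neutral ballI) simp
qed

lemma upper_pairs:
  assumes val: "\<forall>x\<in>set xs. valid_item x"
  shows "overflow_prob xs \<le> (\<Sum>i<length xs. \<Sum>j\<in>{..<length xs} - {i}. fst (xs!i) * fst (xs!j))"
proof -
  let ?I = "{..<length xs}"
  have sl: "i < length xs \<Longrightarrow> snd (xs!i) \<le> 1" for i
    using val nth_mem[of i xs] unfolding valid_item_def by fastforce
  have ind: "(if (\<Sum>i\<in>S. snd (xs ! i)) > 1 then 1 else 0) \<le> (\<Sum>i\<in>?I. \<Sum>j\<in>?I - {i}. if {i,j} \<subseteq> S then 1 else (0::real))"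
    if S: "S \<subseteq> ?I" for S
  proof (cases "(\<Sum>i\<in>S. snd (xs ! i)) > 1")
    case True
    have "\<exists>i\<in>S. \<exists>j\<in>S. i \<noteq> j"
    proof (rule ccontr)
      assume "\<not> ?thesis"
      then have "S = {} \<or> (\<exists>a. S = {a})" by blast
      then show False using True sl S by (auto simp: not_less[symmetric] dest: sl)
    qed
    then obtain i j where ij: "i \<in> S" "j \<in> S" "i \<noteq> j" by blast
    have "1 \<le> (\<Sum>j'\<in>?I - {i}. if {i,j'} \<subseteq> S then 1 else (0::real))"
    proof -
      have "(if {i,j} \<subseteq> S then 1 else (0::real)) \<le> (\<Sum>j'\<in>?I - {i}. if {i,j'} \<subseteq> S then 1 else (0::real))"
        using ij S by (intro member_le_sum) auto
      then show ?thesis using ij by simp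
    qed
    also have "\<dots> \<le> (\<Sum>i\<in>?I. \<Sum>j\<in>?I - {i}. if {i,j} \<subseteq> S then 1 else (0::real))"
      using ij S by (intro member_le_sum[where i=i] sum_nonneg) auto
    finally show ?thesis using True by simp
  qed (simp add: sum_nonneg)
  have "overflow_prob xs \<le> (\<Sum>S\<in>Pow ?I. wt xs S * (\<Sum>i\<in>?I. \<Sum>j\<in>?I - {i}. if {i,j} \<subseteq> S then 1 else (0::real)))"
    unfolding overflow_wt using ind wt_nonneg[OF val] by (intro sum_mono mult_left_mono) auto
  also have "\<dots> = (\<Sum>i\<in>?I. \<Sum>j\<in>?I - {i}. \<Sum>S\<in>Pow ?I. wt xs S * (if {i,j} \<subseteq> S then 1 else 0))"
    by (simp add: sum_distrib_left sum.swap[of _ "Pow ?I"])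
  also have "\<dots> = (\<Sum>i\<in>?I. \<Sum>j\<in>?I - {i}. fst (xs!i) * fst (xs!j))"
  proof (intro sum.cong refl)
    fix i j assume "i \<in> ?I" "j \<in> ?I - {i}"
    then show "(\<Sum>S\<in>Pow ?I. wt xs S * (if {i,j} \<subseteq> S then 1 else 0)) = fst (xs!i) * fst (xs!j)"
      using marg_wt[of "{i,j}" xs] by auto
  qed
  finally show ?thesis by simp
qed



definition hist :: "item list list \<Rightarrow> history" where
  "hist L = concat (map (\<lambda>j. map (\<lambda>x. (x, j)) (L ! j)) [0..<length L])"

lemma hist_Nil[simp]: "hist [] = []" by (simp add: hist_def)

lemma hist_snoc: "hist (L @ [b]) = hist L @ map (\<lambda>x. (x, length L)) b"
  unfolding hist_def by (auto simp: nth_append intro!: arg_cong[where f=concat] map_cong)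

lemma bin_append: "bin (h @ map (\<lambda>x. (x, m)) b) j = bin h j @ (if j = m then b else [])"
  unfolding bin_def by (induction b) auto

lemma bin_hist: "bin (hist L) j = (if j < length L then L ! j else [])"
proof (induction L rule: rev_induct)
  case Nil then show ?case by (simp add: bin_def)
next
  case (snoc b L)
  show ?case unfolding hist_snoc bin_append snoc by (auto simp: nth_append)
qed

lemma snd_hist: "\<forall>b\<in>set L. b \<noteq> [] \<Longrightarrow> snd ` set (hist L) = {..<length L}"
proof (induction L rule: rev_induct)
  case Nil then show ?case by simp
next
  case (snoc b L)
  then have "snd ` set (map (\<lambda>x. (x, length L)) b) = {length L}" by (cases b) auto
  then show ?case unfolding hist_snoc using snoc by (auto simp: image_Un lessThan_Suc)
qed

lemma nbins_hist: assumes "\<forall>b\<in>set L. b \<noteq> []" shows "nbins (hist L) = length L"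
proof (cases "L = []")
  case True then show ?thesis by (simp add: nbins_def)
next
  case False
  then have "hist L \<noteq> []" using snd_hist[OF assms] by (metis empty_set image_empty lessThan_empty_iff length_0_conv)
  moreover have "Max {..<length L} = length L - 1" using False
    by (intro Max_eqI) auto
  ultimately show ?thesis using snd_hist[OF assms] False unfolding nbins_def by simp
qed

lemma step_new:
  assumes af: "any_fit \<alpha> A" and v: "valid_item x" and ne: "\<forall>b\<in>set L. b \<noteq> []"
    and nf: "\<forall>b\<in>set L. \<not> viable \<alpha> (b @ [x])"
  shows "run A (hist L) (x # xs) = run A (hist (L @ [[x]])) xs"
proof -
  have nb: "nbins (hist L) = length L" by (rule nbins_hist[OF ne])
  have "\<not> A (hist L) x < nbins (hist L)"
  proof
    assume a: "A (hist L) x < nbins (hist L)"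
    then have "viable \<alpha> (bin (hist L) (A (hist L) x) @ [x])" using af v unfolding any_fit_def by blast
    then show False using nf a nb by (simp add: bin_hist)
  qed
  then have "min (A (hist L) x) (nbins (hist L)) = length L" using nb by simp
  then show ?thesis by (simp add: hist_snoc)
qed

lemma step_last:
  assumes af: "any_fit \<alpha> A" and v: "valid_item x" and ne: "\<forall>b\<in>set (L @ [b]). b \<noteq> []"
    and nf: "\<forall>b\<in>set L. \<not> viable \<alpha> (b @ [x])" and fit: "viable \<alpha> (b @ [x])"
  shows "run A (hist (L @ [b])) (x # xs) = run A (hist (L @ [b @ [x]])) xs"
proof -
  let ?h = "hist (L @ [b])"
  have nb: "nbins ?h = Suc (length L)" using nbins_hist[OF ne] by simp
  have lt: "A ?h x < nbins ?h"
  proof (rule ccontr)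
    assume "\<not> A ?h x < nbins ?h"
    then have "nbins ?h \<le> A ?h x" by simp
    then have "\<forall>j<nbins ?h. \<not> viable \<alpha> (bin ?h j @ [x])" using af v unfolding any_fit_def by blast
    then have "\<not> viable \<alpha> (bin ?h (length L) @ [x])" using nb by simp
    then show False using fit by (simp add: bin_hist)
  qed
  then have vv: "viable \<alpha> (bin ?h (A ?h x) @ [x])" using af v unfolding any_fit_def by blast
  have eq: "A ?h x = length L"
  proof (rule ccontr)
    assume "A ?h x \<noteq> length L"
    then have "A ?h x < length L" using lt nb by simp
    then show False using vv nf by (simp add: bin_hist nth_append)
  qed
  have "hist (L @ [b @ [x]]) = ?h @ [(x, length L)]" by (simp add: hist_snoc)
  then show ?thesis using eq lt by simp
qed



definition Hi :: item where "Hi = (1, 1)"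
definition Ai :: "real \<Rightarrow> item" where "Ai a = (2 * a, 1)"
definition Bi :: "nat \<Rightarrow> item" where "Bi n = (1/2, 1 / real n)"

lemma valid_H: "valid_item Hi" by (simp add: valid_item_def Hi_def)
lemma valid_A: "0 < a \<Longrightarrow> a \<le> 1/2 \<Longrightarrow> valid_item (Ai a)" by (simp add: valid_item_def Ai_def)
lemma valid_B: "0 < n \<Longrightarrow> valid_item (Bi n)" by (simp add: valid_item_def Bi_def)

lemma nv2:
  assumes "valid_item a" "valid_item b" "snd a + snd b > 1" "fst a * fst b > \<alpha>"
  shows "\<not> viable \<alpha> [a, b]"
proof -
  have "(\<Prod>i\<in>{0,1}. fst ([a,b] ! i)) \<le> overflow_prob [a,b]"
    using assms by (intro lower_one) auto
  then show ?thesis using assms unfolding viable_def by simp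
qed

lemma v2:
  assumes "valid_item a" "valid_item b" "fst a * fst b \<le> \<alpha>"
  shows "viable \<alpha> [a, b]"
proof -
  have sl: "snd a \<le> 1" "snd b \<le> 1" "0 < snd a" "0 < snd b" using assms unfolding valid_item_def by auto
  have "overflow_prob [a,b] \<le> (\<Prod>i\<in>{0,1}. fst ([a,b] ! i))"
  proof (rule upper_T)
    show "\<forall>x\<in>set [a,b]. valid_item x" using assms by auto
    show "{0,1} \<subseteq> {..<length [a,b]}" by auto
  next
    fix S assume S: "S \<subseteq> {..<length [a,b]}" and g: "(\<Sum>i\<in>S. snd ([a,b] ! i)) > 1"
    have "S \<subseteq> {0,1}" using S by auto
    then have "S = {} \<or> S = {0} \<or> S = {1} \<or> S = {0,1}" by blast
    then show "{0,1} \<subseteq> S" using g sl by auto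
  qed
  then show ?thesis using assms unfolding viable_def by simp
qed

lemma nv3:
  assumes "valid_item a" "valid_item b" "valid_item c"
    and "T1 \<subseteq> {0,1,2}" "T2 \<subseteq> {0,1,2}"
    and "(\<Sum>i\<in>T1. snd ([a,b,c] ! i)) > 1" "(\<Sum>i\<in>T2. snd ([a,b,c] ! i)) > 1"
    and "(\<Prod>i\<in>T1. fst ([a,b,c] ! i)) + (\<Prod>i\<in>T2. fst ([a,b,c] ! i)) - (\<Prod>i\<in>T1 \<union> T2. fst ([a,b,c] ! i)) > \<alpha>"
  shows "\<not> viable \<alpha> [a, b, c]"
proof -
  have "{0,1,2} = {..<length [a,b,c]}" by auto
  then have "(\<Prod>i\<in>T1. fst ([a,b,c] ! i)) + (\<Prod>i\<in>T2. fst ([a,b,c] ! i)) - (\<Prod>i\<in>T1 \<union> T2. fst ([a,b,c] ! i)) \<le> overflow_prob [a,b,c]"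
    using assms by (intro lower_two) auto
  then show ?thesis using assms unfolding viable_def by simp
qed

context
  fixes \<alpha> :: real and n :: nat
  assumes al: "0 < \<alpha>" "\<alpha> \<le> 1/16" and n: "0 < n"
begin

lemma vA: "valid_item (Ai \<alpha>)" using al by (intro valid_A) auto
lemma vB: "valid_item (Bi n)" using n by (intro valid_B)

lemma nHH: "\<not> viable \<alpha> [Hi, Hi]" using al by (intro nv2 valid_H) (auto simp: Hi_def)
lemma nHA: "\<not> viable \<alpha> [Hi, Ai \<alpha>]" using al by (intro nv2 valid_H vA) (auto simp: Hi_def Ai_def)
lemma nHB: "\<not> viable \<alpha> [Hi, Bi n]" using al n by (intro nv2 valid_H vB) (auto simp: Hi_def Bi_def)
lemma yAB: "viable \<alpha> [Ai \<alpha>, Bi n]" using al by (intro v2 vA vB) (auto simp: Ai_def Bi_def)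
lemma nABA: "\<not> viable \<alpha> [Ai \<alpha>, Bi n, Ai \<alpha>]"
proof (rule nv3[of _ _ _ "{0,1}" "{1,2}"])
  have "{0::nat,1} \<union> {1,2} = {0,1,2}" by auto
  then show "(\<Prod>i\<in>{0,1}. fst ([Ai \<alpha>, Bi n, Ai \<alpha>] ! i)) + (\<Prod>i\<in>{1,2}. fst ([Ai \<alpha>, Bi n, Ai \<alpha>] ! i)) - (\<Prod>i\<in>{0,1} \<union> {1,2}. fst ([Ai \<alpha>, Bi n, Ai \<alpha>] ! i)) > \<alpha>"
    using al by (simp add: Ai_def Bi_def power2_eq_square)
qed (insert n vA vB, simp_all add: Ai_def Bi_def)
lemma nABB: "\<not> viable \<alpha> [Ai \<alpha>, Bi n, Bi n]"
proof (rule nv3[of _ _ _ "{0,1}" "{0,2}"])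
  have "{0::nat,1} \<union> {0,2} = {0,1,2}" by auto
  then show "(\<Prod>i\<in>{0,1}. fst ([Ai \<alpha>, Bi n, Bi n] ! i)) + (\<Prod>i\<in>{0,2}. fst ([Ai \<alpha>, Bi n, Bi n] ! i)) - (\<Prod>i\<in>{0,1} \<union> {0,2}. fst ([Ai \<alpha>, Bi n, Bi n] ! i)) > \<alpha>"
    using al by (simp add: Ai_def Bi_def)
qed (insert n vA vB, simp_all add: Ai_def Bi_def)

lemma phase1:
  assumes af: "any_fit \<alpha> A"
  shows "run A (hist (replicate m [Hi])) (replicate r Hi @ R) = run A (hist (replicate (m+r) [Hi])) R"
proof (induction r arbitrary: m)
  case 0 then show ?case by simp
next
  case (Suc r)
  have "run A (hist (replicate m [Hi])) (replicate (Suc r) Hi @ R)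
      = run A (hist (replicate m [Hi])) (Hi # (replicate r Hi @ R))" by simp
  also have "\<dots> = run A (hist (replicate m [Hi] @ [[Hi]])) (replicate r Hi @ R)"
    by (rule step_new[OF af valid_H]) (use nHH in auto)
  also have "replicate m [Hi] @ [[Hi]] = replicate (Suc m) [Hi]" by (simp add: replicate_append_same)
  finally show ?case using Suc[of "Suc m"] by simp
qed

lemma phase2:
  assumes af: "any_fit \<alpha> A"
  shows "run A (hist (replicate N [Hi] @ replicate t [Ai \<alpha>, Bi n])) (concat (replicate r [Ai \<alpha>, Bi n]))
       = hist (replicate N [Hi] @ replicate (t + r) [Ai \<alpha>, Bi n])"
proof (induction r arbitrary: t)
  case 0 then show ?case by simp
next
  case (Suc r)
  let ?L = "replicate N [Hi] @ replicate t [Ai \<alpha>, Bi n]"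
  have "run A (hist ?L) (concat (replicate (Suc r) [Ai \<alpha>, Bi n]))
      = run A (hist ?L) (Ai \<alpha> # Bi n # concat (replicate r [Ai \<alpha>, Bi n]))" by simp
  also have "\<dots> = run A (hist (?L @ [[Ai \<alpha>]])) (Bi n # concat (replicate r [Ai \<alpha>, Bi n]))"
    by (rule step_new[OF af vA]) (use nHA nABA in auto)
  also have "\<dots> = run A (hist (?L @ [[Ai \<alpha>] @ [Bi n]])) (concat (replicate r [Ai \<alpha>, Bi n]))"
    using nHB nABB yAB by (intro step_last[OF af vB]) auto
  also have "?L @ [[Ai \<alpha>] @ [Bi n]] = replicate N [Hi] @ replicate (Suc t) [Ai \<alpha>, Bi n]"
    by (simp add: replicate_append_same)
  finally show ?case using Suc[of "Suc t"] by simp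
qed

definition inst :: "nat \<Rightarrow> item list" where
  "inst N = replicate N Hi @ concat (replicate n [Ai \<alpha>, Bi n])"

lemma bins_used_inst:
  assumes af: "any_fit \<alpha> A"
  shows "bins_used A (inst N) = N + n"
proof -
  have "run A [] (inst N) = run A (hist (replicate N [Hi])) (concat (replicate n [Ai \<alpha>, Bi n]))"
    unfolding inst_def using phase1[OF af, of 0 N] by simp
  also have "\<dots> = hist (replicate N [Hi] @ replicate n [Ai \<alpha>, Bi n])"
    using phase2[OF af, of N 0 n] by simp
  finally have "bins_used A (inst N) = nbins (hist (replicate N [Hi] @ replicate n [Ai \<alpha>, Bi n]))"
    unfolding bins_used_def by simp
  also have "\<dots> = N + n" by (subst nbins_hist) auto
  finally show ?thesis .
qed

end


lemma lc_map: "[g i. i \<leftarrow> xs, P i] = map g (filter P xs)" by (induction xs) auto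

lemma len_filt: "length (filter P [0..<L]) = card {i. i < L \<and> P i}"
proof -
  have "length (filter P [0..<L]) = card (set (filter P [0..<L]))"
    by (metis distinct_card distinct_filter distinct_upt)
  also have "set (filter P [0..<L]) = {i. i < L \<and> P i}" by auto
  finally show ?thesis .
qed

lemma concat_rep_nth: "i < 2 * n \<Longrightarrow> concat (replicate n [a, b]) ! i = (if even i then a else b)"
proof (induction n arbitrary: i)
  case 0 then show ?case by simp
next
  case (Suc n)
  show ?case
  proof (cases i)
    case 0 then show ?thesis by simp
  next
    case (Suc i')
    then show ?thesis
    proof (cases i')
      case 0 then show ?thesis using Suc by simp
    next
      case (Suc i'')
      then show ?thesis using Suc.IH[of i''] Suc.prems \<open>i = Suc i'\<close> by simp
    qed
  qed
qed

lemma viable_zero: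
  assumes "\<forall>y\<in>set ys. valid_item y" "\<forall>y\<in>set ys. snd y \<le> s" "real (length ys) * s \<le> 1" "\<alpha> \<ge> 0"
  shows "viable \<alpha> ys"
proof -
  have "(\<Sum>i<length ys. snd (ys ! i)) \<le> real (card {..<length ys}) * s"
    using assms(2) by (intro sum_bounded_above) auto
  then have "overflow_prob ys = 0" using assms by (intro upper_zero) auto
  then show ?thesis using assms unfolding viable_def by simp
qed

lemma viable_pairs:
  assumes "\<forall>y\<in>set ys. valid_item y" "\<forall>y\<in>set ys. fst y = p" "real (length ys) * real (length ys) * (p * p) \<le> \<alpha>" "p \<ge> 0"
  shows "viable \<alpha> ys"
proof -
  let ?L = "length ys"
  have "(\<Sum>i<?L. \<Sum>j\<in>{..<?L} - {i}. fst (ys!i) * fst (ys!j)) \<le> real (card {..<?L}) * (real ?L * (p * p))"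
  proof (rule sum_bounded_above)
    fix i assume i: "i \<in> {..<?L}"
    have "(\<Sum>j\<in>{..<?L} - {i}. fst (ys!i) * fst (ys!j)) \<le> real (card ({..<?L} - {i})) * (p * p)"
      using assms(2) i by (intro sum_bounded_above) auto
    also have "\<dots> \<le> real ?L * (p * p)" using assms(4)
      by (intro mult_right_mono) (auto intro: order_trans[OF card_Diff1_le])
    finally show "(\<Sum>j\<in>{..<?L} - {i}. fst (ys!i) * fst (ys!j)) \<le> real ?L * (p * p)" .
  qed
  then have "overflow_prob ys \<le> \<alpha>" using upper_pairs[OF assms(1)] assms(3) by simp
  then show ?thesis unfolding viable_def .
qed

lemma two_H:
  assumes "\<forall>y\<in>set ys. valid_item y" "a < length ys" "b < length ys" "a \<noteq> b" "ys ! a = Hi" "ys ! b = Hi" "\<alpha> < 1"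
  shows "\<not> viable \<alpha> ys"
proof -
  have "(\<Prod>i\<in>{a,b}. fst (ys ! i)) \<le> overflow_prob ys"
    using assms by (intro lower_one) (auto simp: Hi_def)
  then show ?thesis using assms unfolding viable_def by (simp add: Hi_def)
qed

context
  fixes \<alpha> :: real and n :: nat and k :: nat
  assumes al: "0 < \<alpha>" "\<alpha> \<le> 1/16" and n: "0 < n" and k: "0 < k" "4 * real k * real k * \<alpha> \<le> 1"
begin

definition mm where "mm = (n - 1) div k + 1"
definition ff :: "nat \<Rightarrow> nat \<Rightarrow> nat" where
  "ff N i = (if i < N then i else if even (i - N) then N + ((i - N) div 2) div k else N + mm)"

lemma len_inst: "length (inst \<alpha> n N) = N + 2 * n"
  using al n by (simp add: inst_def length_concat sum_list_replicate)

lemma nth_inst: "i < N + 2 * n \<Longrightarrow> inst \<alpha> n N ! i = (if i < N then Hi else if even (i - N) then Ai \<alpha> else Bi n)"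
  using al n by (auto simp: inst_def nth_append concat_rep_nth)

lemma valid_inst: "\<forall>x\<in>set (inst \<alpha> n N). valid_item x"
  using al n by (auto simp: inst_def valid_H vA vB)

lemma ff_A_lt: "i < N + 2 * n \<Longrightarrow> \<not> i < N \<Longrightarrow> ((i - N) div 2) div k < mm"
proof -
  assume "i < N + 2 * n" "\<not> i < N"
  then have "(i - N) div 2 \<le> n - 1" by linarith
  then have "((i - N) div 2) div k \<le> (n - 1) div k" by (rule div_le_mono)
  then show ?thesis unfolding mm_def by simp
qed

lemma packing: "viable_packing \<alpha> (inst \<alpha> n N) (N + mm + 1) (ff N)"
  unfolding viable_packing_def
proof (intro conjI allI impI)
  fix i assume "i < length (inst \<alpha> n N)"
  then show "ff N i < N + mm + 1" using ff_A_lt[of i N] unfolding ff_def len_inst by auto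
next
  fix j assume j: "j < N + mm + 1"
  let ?xs = "inst \<alpha> n N"
  let ?ys = "[?xs ! i. i \<leftarrow> [0..<length ?xs], ff N i = j]"
  let ?C = "{i. i < N + 2 * n \<and> ff N i = j}"
  have ys: "?ys = map (nth ?xs) (filter (\<lambda>i. ff N i = j) [0..<N + 2 * n])" by (simp add: lc_map len_inst)
  have len: "length ?ys = card ?C" unfolding ys by (simp add: len_filt)
  have setys: "set ?ys = (nth ?xs) ` ?C" unfolding ys by auto
  have vys: "\<forall>y\<in>set ?ys. valid_item y" using valid_inst[of N] nth_mem[of _ ?xs] by (auto simp: ys len_inst)
  consider (H) "j < N" | (A) "N \<le> j" "j < N + mm" | (B) "j = N + mm" using j by linarith
  then show "viable \<alpha> ?ys"
  proof cases
    case H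
    have C: "?C \<subseteq> {j}" using H ff_A_lt unfolding ff_def by (auto split: if_splits)
    then have "card ?C \<le> 1" using card_mono[OF _ C] by simp
    moreover have "\<forall>y\<in>set ?ys. snd y \<le> 1" using vys unfolding valid_item_def by auto
    ultimately show ?thesis using vys al by (intro viable_zero[where s=1]) (auto simp: len)
  next
    case A
    define c where "c = j - N"
    have C: "?C \<subseteq> (\<lambda>r. N + 2 * r) ` {c * k..<c * k + k}"
    proof
      fix i assume i: "i \<in> ?C"
      then have "\<not> i < N" using A unfolding ff_def by auto
      moreover have "even (i - N)" using i A \<open>\<not> i < N\<close> unfolding ff_def by (auto split: if_splits)
      moreover have "((i - N) div 2) div k = c" using i \<open>\<not> i < N\<close> \<open>even (i - N)\<close> unfolding ff_def c_def by auto
      ultimately have "i = N + 2 * ((i - N) div 2)" "(i - N) div 2 \<in> {c * k..<c * k + k}"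
        using k(1) by (auto simp: dvd_def) (metis div_mult_mod_eq mod_less_divisor le_add1 add_less_cancel_left)+
      then show "i \<in> (\<lambda>r. N + 2 * r) ` {c * k..<c * k + k}" by blast
    qed
    have "card ?C \<le> k" using card_mono[OF _ C] card_image_le[of "{c * k..<c * k + k}" "\<lambda>r. N + 2 * r"] by simp
    moreover have "\<forall>y\<in>set ?ys. fst y = 2 * \<alpha>"
      unfolding setys using A ff_A_lt by (auto simp: ff_def nth_inst Ai_def split: if_splits)
    ultimately show ?thesis using vys al
    proof (intro viable_pairs[where p="2 * \<alpha>"])
      have "real (card ?C) * real (card ?C) * (2 * \<alpha> * (2 * \<alpha>)) \<le> real k * real k * (2 * \<alpha> * (2 * \<alpha>))"
        using \<open>card ?C \<le> k\<close> al by (intro mult_right_mono mult_mono) auto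
      also have "\<dots> = (4 * real k * real k * \<alpha>) * \<alpha>" by simp
      also have "\<dots> \<le> \<alpha>" using k(2) al by (simp add: mult_le_cancel_right1)
      finally show "real (length ?ys) * real (length ?ys) * (2 * \<alpha> * (2 * \<alpha>)) \<le> \<alpha>" by (simp add: len)
    qed auto
  next
    case B
    have mem: "\<not> i < N \<and> odd (i - N) \<and> i < N + 2 * n" if i: "i \<in> ?C" for i
    proof -
      have "\<not> i < N" using i B unfolding ff_def by auto
      moreover have "odd (i - N)" using i B \<open>\<not> i < N\<close> ff_A_lt[of i N] unfolding ff_def by (auto split: if_splits)
      ultimately show ?thesis using i by auto
    qed
    have C: "?C \<subseteq> (\<lambda>r. N + 2 * r + 1) ` {..<n}"
    proof
      fix i assume i: "i \<in> ?C"
      then have "i = N + 2 * ((i - N) div 2) + 1" "(i - N) div 2 < n" using mem[OF i] by auto presburger+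
      then show "i \<in> (\<lambda>r. N + 2 * r + 1) ` {..<n}" by blast
    qed
    have "card ?C \<le> n" using card_mono[OF _ C] card_image_le[of "{..<n}" "\<lambda>r. N + 2 * r + 1"] by simp
    moreover have "\<forall>y\<in>set ?ys. snd y = 1 / real n"
      unfolding setys using mem by (auto simp: nth_inst Bi_def)
    ultimately show ?thesis using vys al n
      by (intro viable_zero[where s="1 / real n"]) (auto simp: len field_simps)
  qed
qed

lemma OPT_le: "OPT \<alpha> (inst \<alpha> n N) \<le> N + mm + 1"
  unfolding OPT_def using packing by (intro Least_le) blast

lemma OPT_ge: "N \<le> OPT \<alpha> (inst \<alpha> n N)"
proof (rule ccontr)
  let ?xs = "inst \<alpha> n N"
  assume "\<not> N \<le> OPT \<alpha> ?xs"
  then have lt: "OPT \<alpha> ?xs < N" by simp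
  have "\<exists>g. viable_packing \<alpha> ?xs (OPT \<alpha> ?xs) g"
    unfolding OPT_def using LeastI_ex[of "\<lambda>K. \<exists>g. viable_packing \<alpha> ?xs K g"] packing by blast
  then obtain g where g: "viable_packing \<alpha> ?xs (OPT \<alpha> ?xs) g" by blast
  have "g ` {..<N} \<subseteq> {..<OPT \<alpha> ?xs}" using g len_inst unfolding viable_packing_def by auto
  then have "card (g ` {..<N}) \<le> OPT \<alpha> ?xs" by (metis card_lessThan card_mono finite_lessThan)
  then have "\<not> inj_on g {..<N}" using lt by (intro pigeonhole) simp
  then obtain i i' where ii: "i < N" "i' < N" "i \<noteq> i'" "g i = g i'" unfolding inj_on_def by auto
  let ?j = "g i"
  have jl: "?j < OPT \<alpha> ?xs" using g ii len_inst unfolding viable_packing_def by auto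
  let ?zs = "filter (\<lambda>l. g l = ?j) [0..<length ?xs]"
  let ?ys = "[?xs ! l. l \<leftarrow> [0..<length ?xs], g l = ?j]"
  have ys: "?ys = map (nth ?xs) ?zs" by (simp add: lc_map)
  have "i \<in> set ?zs" "i' \<in> set ?zs" using ii len_inst by auto
  then obtain a b where ab: "a < length ?zs" "?zs ! a = i" "b < length ?zs" "?zs ! b = i'"
    by (metis in_set_conv_nth)
  have "a \<noteq> b" using ab ii by auto
  have "\<not> viable \<alpha> ?ys"
  proof (rule two_H)
    show "\<forall>y\<in>set ?ys. valid_item y" using valid_inst[of N] nth_mem[of _ ?xs] by (auto simp: ys)
    show "a < length ?ys" "b < length ?ys" "a \<noteq> b" using ab \<open>a \<noteq> b\<close> by (auto simp: ys)
    have "?ys ! a = ?xs ! (?zs ! a)" "?ys ! b = ?xs ! (?zs ! b)" unfolding ys using ab by simp_all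
    then show "?ys ! a = Hi" "?ys ! b = Hi" using ab ii by (simp_all add: nth_inst)
    show "\<alpha> < 1" using al by simp
  qed
  moreover have "viable \<alpha> ?ys" using g jl unfolding viable_packing_def by blast
  ultimately show False by simp
qed

end


lemma key:
  fixes \<alpha> :: real and A and N :: nat
  assumes al: "0 < \<alpha> \<and> \<alpha> \<le> 1/16" and af: "any_fit \<alpha> A" and N: "0 < N"
  shows "\<exists>xs. (\<forall>x\<in>set xs. valid_item x) \<and> N \<le> OPT \<alpha> xs \<and>
                real (bins_used A xs) \<ge> 1/8 / sqrt \<alpha> * real (OPT \<alpha> xs)"
proof -
  define s where "s = sqrt \<alpha>"
  have s0: "0 < s" using al by (simp add: s_def)
  have ss: "s * s = \<alpha>" using al by (simp add: s_def)
  have s4: "s \<le> 1/4"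
  proof -
    have "sqrt \<alpha> \<le> sqrt (1/16)" using al by (intro real_sqrt_le_mono) simp
    also have "sqrt (1/16::real) = 1/4" by (simp add: real_sqrt_divide)
    finally show ?thesis by (simp add: s_def)
  qed
  define M where "M = nat \<lceil>1/\<alpha>\<rceil>"
  have M: "1/\<alpha> \<le> real M" unfolding M_def by linarith
  define n where "n = (N + 2) * M"
  have a16: "16 \<le> 1/\<alpha>" using al by (simp add: field_simps)
  have Mpos: "0 < M" using M a16 by simp
  have n0: "0 < n" using Mpos by (simp add: n_def)
  define x where "x = 1 / (2 * s)"
  have x2: "2 \<le> x" using s4 s0 by (simp add: x_def field_simps)
  define k where "k = nat \<lfloor>x\<rfloor>"
  have kx: "real k \<le> x" "x - 1 < real k" using x2 unfolding k_def by linarith+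
  have k0: "0 < k" using kx x2 by simp
  have "2 * real k * s \<le> 1" using kx s0 by (simp add: x_def field_simps)
  then have "(2 * real k * s) * (2 * real k * s) \<le> 1 * 1" using s0 by (intro mult_mono) auto
  then have k4: "4 * real k * real k * \<alpha> \<le> 1" by (simp add: ss[symmetric] algebra_simps)
  have alh: "0 < \<alpha>" "\<alpha> \<le> 1/16" using al by auto
  let ?xs = "inst \<alpha> n N"
  have Ole: "OPT \<alpha> ?xs \<le> N + mm n k + 1" using OPT_le[OF alh n0 k0 k4] .
  have Oge: "N \<le> OPT \<alpha> ?xs" using OPT_ge[OF alh n0 k0 k4] .
  have bu: "bins_used A ?xs = N + n" using bins_used_inst[OF alh n0 af] .
  have "real ((n - 1) div k) * real k \<le> real n"
  proof -
    have "(n - 1) div k * k \<le> n" by (metis div_times_less_eq_dividend diff_le_self order_trans)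
    then show ?thesis by (metis of_nat_le_iff of_nat_mult)
  qed
  then have d: "real ((n - 1) div k) \<le> real n / real k" using k0 by (simp add: field_simps)
  have ik: "1 / real k \<le> 4 * s"
  proof -
    have "x / 2 \<le> real k" using kx x2 by linarith
    then have "1 / (4 * s) \<le> real k" using s0 by (simp add: x_def field_simps)
    then show ?thesis using s0 k0 by (simp add: field_simps)
  qed
  have "real (mm n k) \<le> 4 * s * real n + 1"
  proof -
    have "real n / real k = real n * (1 / real k)" by simp
    also have "\<dots> \<le> real n * (4 * s)" using ik by (intro mult_left_mono) auto
    finally show ?thesis using d mm_def[OF alh n0 k0 k4] by (simp only: of_nat_add of_nat_1 mult.commute[of "4*s"])
  qed
  then have O: "real (OPT \<alpha> ?xs) \<le> real N + 2 + 4 * s * real n" using Ole by linarith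
  have nbig: "(real N + 2) / s \<le> real n"
  proof -
    have "(real N + 2) / s \<le> (real N + 2) / \<alpha>"
    proof (rule divide_left_mono)
      have "s * s \<le> s * 1" using s0 s4 by (intro mult_left_mono) auto
      then show "\<alpha> \<le> s" using ss by simp
      show "0 \<le> real N + 2" by simp
      show "0 < s * \<alpha>" using s0 al by simp
    qed
    also have "\<dots> = (real N + 2) * (1/\<alpha>)" by simp
    also have "\<dots> \<le> (real N + 2) * real M" using M by (intro mult_left_mono) auto
    finally show ?thesis by (simp add: n_def algebra_simps)
  qed
  have "1/8 / sqrt \<alpha> * real (OPT \<alpha> ?xs) = real (OPT \<alpha> ?xs) / (8 * s)" by (simp add: s_def)
  also have "\<dots> \<le> (real N + 2 + 4 * s * real n) / (8 * s)" using O s0 by (intro divide_right_mono) auto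
  also have "\<dots> = (real N + 2) / s / 8 + real n / 2" using s0 by (simp add: field_simps)
  also have "\<dots> \<le> real (bins_used A ?xs)" using nbig bu by simp
  finally have main: "1/8 / sqrt \<alpha> * real (OPT \<alpha> ?xs) \<le> real (bins_used A ?xs)" .
  show ?thesis
    using valid_inst[OF alh n0 k0 k4] Oge main by blast
qed

theorem theorem2:
  shows "\<exists>c::real. c > 0 \<and> (\<exists>\<alpha>0::real. 0 < \<alpha>0 \<and> \<alpha>0 \<le> 1/2 \<and>
    (\<forall>\<alpha>. 0 < \<alpha> \<and> \<alpha> \<le> \<alpha>0 \<longrightarrow>
      (\<forall>A. any_fit \<alpha> A \<longrightarrow>
        (\<forall>N::nat. 0 < N \<longrightarrow>
          (\<exists>xs. (\<forall>x\<in>set xs. valid_item x) \<and> N \<le> OPT \<alpha> xs \<and>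
                real (bins_used A xs) \<ge> c / sqrt \<alpha> * real (OPT \<alpha> xs))))))"
  by (intro exI[of _ "1/8"] conjI exI[of _ "1/16"] allI impI key) auto


end
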